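(* Let $\tilde S\subseteq\mathfrak P$ and $a,b\in\mathcal C_{\mathfrak P}(\tilde S)$ with $\omega_{\tilde S}(a)<\omega_{\tilde S}(b)$. Then $\omega_{\tilde S}(a\cdot b)=\omega_{\tilde S}(a)$.
   Context: $\mathfrak P$ is the group of $N$-qubit Pauli operators modulo phases; $\mathcal C_{\mathfrak P}(\tilde S)$ is the centralizer of $\tilde S$ in $\mathfrak P$. The weight of a Pauli operator is its number of non-identity tensor factors. For $l\in\mathcal C_{\mathfrak P}(\tilde S)$, $\omega_{\tilde S}(l)$ is the minimum weight of an operator $e\in\mathcal C_{\mathfrak P}(\tilde S)$ that anticommutes with $l$, with value $+\infty$ if no such $e$ exists. *)

theory Defs
  imports Main "HOL-Library.Extended_Nat"
begin

text \<open>Single-qubit Pauli operators modulo phases.\<close>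
datatype pauli1 = PI | PX | PY | PZ

fun pmult1 :: "pauli1 \<Rightarrow> pauli1 \<Rightarrow> pauli1" where
  "pmult1 PI q = q"
| "pmult1 p PI = p"
| "pmult1 PX PX = PI" | "pmult1 PY PY = PI" | "pmult1 PZ PZ = PI"
| "pmult1 PX PY = PZ" | "pmult1 PY PX = PZ"
| "pmult1 PX PZ = PY" | "pmult1 PZ PX = PY"
| "pmult1 PY PZ = PX" | "pmult1 PZ PY = PX"

text \<open>N-qubit Paulis modulo phases: the qubits are indexed by a finite type 'n (N = CARD('n)).\<close>
type_synonym 'n pauli = "'n \<Rightarrow> pauli1"

definition pmult :: "'n pauli \<Rightarrow> 'n pauli \<Rightarrow> 'n pauli" where
  "pmult p q = (\<lambda>i. pmult1 (p i) (q i))"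

text \<open>Two N-qubit Paulis anticommute iff they anticommute on an odd number of qubits.\<close>
definition anticommute :: "('n::finite) pauli \<Rightarrow> 'n pauli \<Rightarrow> bool" where
  "anticommute p q = odd (card {i. p i \<noteq> PI \<and> q i \<noteq> PI \<and> p i \<noteq> q i})"

definition weight :: "('n::finite) pauli \<Rightarrow> nat" where
  "weight p = card {i. p i \<noteq> PI}"

definition centralizer :: "('n::finite) pauli set \<Rightarrow> 'n pauli set" where
  "centralizer S = {e. \<forall>s\<in>S. \<not> anticommute e s}"

text \<open>omega S l: minimum weight of e in the centralizer anticommuting with l; infinity if none
  (Inf of the empty set of enat is infinity).\<close>
definition omega :: "('n::finite) pauli set \<Rightarrow> 'n pauli \<Rightarrow> enat" where
  "omega S l = (INF e\<in>{e\<in>centralizer S. anticommute e l}. enat (weight e))"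

end

theory Submission
  imports Defs
begin

definition ac1 :: "pauli1 \<Rightarrow> pauli1 \<Rightarrow> bool" where
  "ac1 p q = (p \<noteq> PI \<and> q \<noteq> PI \<and> p \<noteq> q)"

lemma ac1_mult: "ac1 e (pmult1 a b) = (ac1 e a \<noteq> ac1 e b)"
  by (cases e; cases a; cases b) (simp_all add: ac1_def)

lemma odd_card_xor:
  fixes P Q :: "'n::finite \<Rightarrow> bool"
  shows "odd (card {i. P i \<noteq> Q i}) = (odd (card {i. P i}) \<noteq> odd (card {i. Q i}))"
proof -
  let ?A = "{i. P i}" and ?B = "{i. Q i}"
  have e: "{i. P i \<noteq> Q i} = (?A - ?A \<inter> ?B) \<union> (?B - ?A \<inter> ?B)" by auto
  have c: "card {i. P i \<noteq> Q i} = (card ?A - card (?A \<inter> ?B)) + (card ?B - card (?A \<inter> ?B))"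
    unfolding e by (subst card_Un_disjoint) (auto simp: card_Diff_subset)
  have "card (?A \<inter> ?B) \<le> card ?A" "card (?A \<inter> ?B) \<le> card ?B"
    by (auto intro: card_mono)
  with c show ?thesis by auto
qed

lemma anticomm_mult:
  "anticommute e (pmult a b) = (anticommute e a \<noteq> anticommute e b)"
proof -
  have "anticommute e q = odd (card {i. ac1 (e i) (q i)})" for q :: "'a pauli"
    unfolding anticommute_def ac1_def by simp
  thus ?thesis unfolding pmult_def
    using odd_card_xor[of "\<lambda>i. ac1 (e i) (a i)" "\<lambda>i. ac1 (e i) (b i)"] by (simp add: ac1_mult)
qed

lemma omega_lower:
  assumes "e \<in> centralizer S" "anticommute e l"
  shows "omega S l \<le> enat (weight e)"
  unfolding omega_def using assms by (auto intro: INF_lower)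

lemma omega_greatest:
  assumes "\<And>e. e \<in> centralizer S \<Longrightarrow> anticommute e l \<Longrightarrow> x \<le> enat (weight e)"
  shows "x \<le> omega S l"
  unfolding omega_def using assms by (auto intro: INF_greatest)

lemma omega_attained:
  assumes "omega S l < \<infinity>"
  shows "\<exists>e. e \<in> centralizer S \<and> anticommute e l \<and> omega S l = enat (weight e)"
proof -
  let ?A = "{e\<in>centralizer S. anticommute e l}"
  have "?A \<noteq> {}"
  proof
    assume "?A = {}" then have "omega S l = \<infinity>" unfolding omega_def by (metis INF_empty top_enat_def)
    with assms show False by simp
  qed
  then obtain e0 where "e0 \<in> ?A" by blast
  then have "\<exists>n. \<exists>e\<in>?A. weight e = n" by blast
  from ex_has_least_nat[of "\<lambda>e. e \<in> ?A" e0 weight] \<open>e0 \<in> ?A\<close>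
  obtain e where e: "e \<in> ?A" "\<And>e'. e' \<in> ?A \<Longrightarrow> weight e \<le> weight e'" by blast
  have "omega S l = enat (weight e)"
    apply (rule antisym)
     apply (rule omega_lower) using e(1) apply auto[2]
    apply (rule omega_greatest) using e(2) by auto
  with e show ?thesis by blast
qed

theorem lemma3:
  fixes S :: "('n::finite) pauli set" and a b :: "'n pauli"
  assumes "a \<in> centralizer S" and "b \<in> centralizer S"
    and "omega S a < omega S b"
  shows "omega S (pmult a b) = omega S a"
proof -
  have small: "\<not> anticommute e b" if "e \<in> centralizer S" "enat (weight e) < omega S b" for e
    using omega_lower[of e S b] that by auto
  have "omega S a < \<infinity>" using assms(3) by (metis enat_ord_simps(6) less_le_trans top_greatest
        top_enat_def neq_iff)
  then obtain e0 where e0: "e0 \<in> centralizer S" "anticommute e0 a" "omega S a = enat (weight e0)"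
    using omega_attained by blast
  show ?thesis
  proof (rule antisym)
    have "\<not> anticommute e0 b" using small[OF e0(1)] e0(3) assms(3) by simp
    then have "anticommute e0 (pmult a b)" using e0(2) by (simp add: anticomm_mult)
    then show "omega S (pmult a b) \<le> omega S a" using omega_lower[OF e0(1)] e0(3) by simp
  next
    show "omega S a \<le> omega S (pmult a b)"
    proof (rule omega_greatest)
      fix e assume e: "e \<in> centralizer S" "anticommute e (pmult a b)"
      show "omega S a \<le> enat (weight e)"
      proof (cases "enat (weight e) < omega S b")
        case True
        then have "anticommute e a" using small[OF e(1)] e(2) by (simp add: anticomm_mult)
        then show ?thesis using omega_lower[OF e(1)] by simp
      next
        case False
        then show ?thesis using assms(3) by auto
      qed
    qed
  qed
qed

end
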